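(* Let $P$ and $Q$ be planar surfaces. If $P \rightsquigarrow Q$ and $Q \rightsquigarrow P$, then $P = Q$ (i.e. $P$ and $Q$ are the same point of $\tilde{\mathcal M}$). Consequently $\rightsquigarrow$ is a partial order on $\tilde{\mathcal M}$.
   Context: Let $\Delta$ be the open oriented topological $2$-disk with basepoint $x_0$. A pointed local homeomorphism is an orientation-preserving local homeomorphism $\phi:\Delta\to\mathbb R^2$ with $\phi(x_0)=\mathbf 0$ (this is the developing map of a translation structure on $\Delta$). Two such maps $\phi,\psi$ are isomorphic if $\psi=\phi\circ h^{-1}$ for some orientation-preserving homeomorphism $h$ of $\Delta$ fixing $x_0$. The moduli space $\tilde{\mathcal M}$ is the set of isomorphism classes. An element $P\in\tilde{\mathcal M}$ is called a planar surface; it is regarded as a topological open disk (a copy of $\Delta$ via any representative $\phi$) with a basepoint $o_P$ (the image of $x_0$) and a developing map $\mathrm{dev}_P:P\to\mathbb R^2$ (induced by $\phi$), an orientation-preserving local homeomorphism with $\mathrm{dev}_P(o_P)=\mathbf 0$; these structures are independent of the representative. For a planar surface $P$, $\mathrm{PC}(P)$ denotes the set of path-connected subsets of $P$ containing $o_P$. For $A\in\mathrm{PC}(P)$ and $B\in\mathrm{PC}(Q)$, an immersion $\iota:A\rightsquigarrow B$ is a continuous map $\iota:A\to B$ with $\iota(o_P)=o_Q$ and $\mathrm{dev}_Q\circ\iota=\mathrm{dev}_P$ on $A$; we write $A\rightsquigarrow B$ if an immersion exists. For planar surfaces, $P\rightsquigarrow Q$ means the whole surface $P$ immerses in $Q$.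 *)

theory Defs
  imports "HOL-Analysis.Analysis"
begin

text \<open>The plane R^2 is modelled by the complex numbers (standard orientation),
  the open oriented topological disk by the open unit disk with basepoint 0.\<close>

definition Disk :: "complex set" where
  "Disk = ball 0 1"

definition wind :: "(real \<Rightarrow> complex) \<Rightarrow> complex \<Rightarrow> int" where
  "wind \<gamma> p = (THE n::int. \<exists>g. continuous_on {0..1} g \<and>
       (\<forall>t\<in>{0..1}. \<gamma> t - p = exp (g t)) \<and> g 1 - g 0 = 2 * of_real pi * \<i> * of_int n)"

definition circ :: "complex \<Rightarrow> real \<Rightarrow> real \<Rightarrow> complex" where
  "circ x r t = x + of_real r * exp (2 * of_real pi * \<i> * of_real t)"

definition local_homeo :: "complex set \<Rightarrow> (complex \<Rightarrow> complex) \<Rightarrow> bool" where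
  "local_homeo U f \<longleftrightarrow> (\<forall>x\<in>U. \<exists>V g. open V \<and> x \<in> V \<and> V \<subseteq> U \<and> open (f ` V) \<and>
       homeomorphism V (f ` V) f g)"

definition orient_pres :: "complex set \<Rightarrow> (complex \<Rightarrow> complex) \<Rightarrow> bool" where
  "orient_pres U f \<longleftrightarrow> (\<forall>x\<in>U. \<exists>e>0. \<forall>r. 0 < r \<and> r < e \<longrightarrow> wind (f \<circ> circ x r) (f x) = 1)"

definition pointed_lh :: "(complex \<Rightarrow> complex) \<Rightarrow> bool" where
  "pointed_lh \<phi> \<longleftrightarrow> local_homeo Disk \<phi> \<and> orient_pres Disk \<phi> \<and> \<phi> 0 = 0"

definition iso_plh :: "(complex \<Rightarrow> complex) \<Rightarrow> (complex \<Rightarrow> complex) \<Rightarrow> bool" where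
  "iso_plh \<phi> \<psi> \<longleftrightarrow> (\<exists>h k. homeomorphism Disk Disk h k \<and> orient_pres Disk h \<and> h 0 = 0 \<and>
       (\<forall>y\<in>Disk. \<psi> y = \<phi> (k y)))"

text \<open>Immersion of the planar surface of phi into that of psi (whole surfaces):
  a continuous basepoint-preserving map commuting with the developing maps.\<close>

definition immerses :: "(complex \<Rightarrow> complex) \<Rightarrow> (complex \<Rightarrow> complex) \<Rightarrow> bool" where
  "immerses \<phi> \<psi> \<longleftrightarrow> (\<exists>\<iota>. continuous_on Disk \<iota> \<and> \<iota> ` Disk \<subseteq> Disk \<and> \<iota> 0 = 0 \<and>
       (\<forall>x\<in>Disk. \<psi> (\<iota> x) = \<phi> x))"

end

theory Submission
  imports Defs
begin


lemma exp1_const: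
  fixes h :: "'a::topological_space \<Rightarrow> complex"
  assumes S: "connected S" and c: "continuous_on S h" and e: "\<And>x. x \<in> S \<Longrightarrow> exp (h x) = 1"
  shows "h constant_on S"
proof (rule continuous_discrete_range_constant[OF S c])
  fix x assume x: "x \<in> S"
  show "\<exists>e>0. \<forall>y. y \<in> S \<and> h y \<noteq> h x \<longrightarrow> e \<le> norm (h y - h x)"
  proof (intro exI[of _ "2*pi"] conjI allI impI)
    show "0 < 2*pi" by simp
    fix y assume y: "y \<in> S \<and> h y \<noteq> h x"
    have "exp (h y) = exp (h x)" using e x y by simp
    then obtain n::int where n: "h y = h x + (of_int (2 * n) * pi) * \<i>" using exp_eq by blast
    with y have "n \<noteq> 0" by auto
    then have "1 \<le> \<bar>real_of_int n\<bar>" by linarith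
    have "norm (h y - h x) = 2*pi*\<bar>real_of_int n\<bar>" using n
      by (simp add: norm_mult abs_mult)
    then show "2*pi \<le> norm (h y - h x)" using \<open>1 \<le> _\<close> by simp
  qed
qed

lemma log_incr_unique:
  fixes g1 g2 :: "real \<Rightarrow> complex"
  assumes "continuous_on {0..1} g1" "continuous_on {0..1} g2"
    and "\<And>t. t \<in> {0..1} \<Longrightarrow> exp (g1 t) = exp (g2 t)"
  shows "g1 1 - g1 0 = g2 1 - g2 0"
proof -
  have "(\<lambda>t. g1 t - g2 t) constant_on {0..1}"
    by (rule exp1_const) (auto intro!: continuous_intros assms simp: exp_diff assms(3))
  then obtain k where "\<forall>t\<in>{0..1::real}. g1 t - g2 t = k" by (auto simp: constant_on_def)
  then have "g1 1 - g2 1 = k" "g1 0 - g2 0 = k" by auto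
  then show ?thesis by (simp add: algebra_simps)
qed

lemma wind_char:
  assumes c: "continuous_on {0..1} g" and l: "\<And>t. t \<in> {0..1} \<Longrightarrow> \<gamma> t - p = exp (g t)"
    and i: "g 1 - g 0 = 2 * of_real pi * \<i> * of_int n"
  shows "wind \<gamma> p = n"
  unfolding wind_def
proof (rule the_equality)
  show "\<exists>g. continuous_on {0..1} g \<and> (\<forall>t\<in>{0..1}. \<gamma> t - p = exp (g t)) \<and> g 1 - g 0 = 2 * of_real pi * \<i> * of_int n"
    using assms by blast
  fix m assume "\<exists>g. continuous_on {0..1} g \<and> (\<forall>t\<in>{0..1}. \<gamma> t - p = exp (g t)) \<and> g 1 - g 0 = 2 * of_real pi * \<i> * of_int m"
  then obtain g' where g': "continuous_on {0..1} g'" "\<forall>t\<in>{0..1}. \<gamma> t - p = exp (g' t)" "g' 1 - g' 0 = 2 * of_real pi * \<i> * of_int m" by blast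
  have "g' 1 - g' 0 = g 1 - g 0" by (rule log_incr_unique) (use g' c l in auto)
  then have "2 * of_real pi * \<i> * of_int m = 2 * of_real pi * \<i> * (of_int n :: complex)" using g' i by simp
  then show "m = n" by simp
qed

lemma wind_exists:
  fixes \<gamma> :: "real \<Rightarrow> complex"
  assumes c: "continuous_on {0..1} \<gamma>" and ne: "\<And>t. t \<in> {0..1} \<Longrightarrow> \<gamma> t \<noteq> p" and cl: "\<gamma> 1 = \<gamma> 0"
  shows "\<exists>g. continuous_on {0..1} g \<and> (\<forall>t\<in>{0..1}. \<gamma> t - p = exp (g t)) \<and> g 1 - g 0 = 2 * of_real pi * \<i> * of_int (wind \<gamma> p)"
proof -
  obtain g where g: "continuous_on {0..1} g" "\<And>t. t \<in> {0..1::real} \<Longrightarrow> \<gamma> t - p = exp (g t)"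
  proof (rule continuous_logarithm_on_contractible[of "{0..1::real}" "\<lambda>t. \<gamma> t - p"])
    show "continuous_on {0..1} (\<lambda>t. \<gamma> t - p)" using c by (intro continuous_intros)
    show "contractible {0..1::real}" by (rule convex_imp_contractible) simp
  qed (use ne in auto)
  have "exp (g 1) = exp (g 0)" using g(2)[of 0] g(2)[of 1] cl by simp
  then obtain n::int where n: "g 1 = g 0 + (of_int (2 * n) * pi) * \<i>" using exp_eq by blast
  then have i: "g 1 - g 0 = 2 * of_real pi * \<i> * of_int n" by simp
  have "wind \<gamma> p = n" by (rule wind_char[OF g i]) 
  with g i show ?thesis by auto
qed

lemma circ_cont: "continuous_on S (circ x r)"
  unfolding circ_def by (intro continuous_intros)

lemma circ_closed: "circ x r 1 = circ x r 0"
  unfolding circ_def by simp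

lemma circ_dist: "r > 0 \<Longrightarrow> dist x (circ x r t) = r"
  unfolding circ_def dist_complex_def by (simp add: norm_mult)

lemma wind_circ: assumes "r > 0" shows "wind (circ x r) x = 1"
proof (rule wind_char[of "\<lambda>t. of_real (ln r) + 2 * of_real pi * \<i> * of_real t"])
  show "continuous_on {0..1} (\<lambda>t. of_real (ln r) + 2 * of_real pi * \<i> * of_real t)"
    by (intro continuous_intros)
  fix t :: real
  show "circ x r t - x = exp (of_real (ln r) + 2 * of_real pi * \<i> * of_real t)"
    using assms unfolding circ_def by (simp add: exp_add exp_of_real)
qed simp



lemma key:
  assumes hom: "homeomorphism V0 (ball c R) \<psi> G" and y: "y \<in> V0" "\<psi> y = c"
    and sc: "continuous_on {0..1} \<sigma>" and sV: "\<And>t. t \<in> {0..1} \<Longrightarrow> \<sigma> t \<in> V0 \<and> \<sigma> t \<noteq> y"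
    and scl: "\<sigma> 1 = \<sigma> 0"
    and rho: "\<rho> > 0" "cball y \<rho> \<subseteq> V0"
    and w1: "wind (\<psi> \<circ> \<sigma>) c = 1" and w2: "wind (\<psi> \<circ> circ y \<rho>) c = 1"
  shows "wind \<sigma> y = 1"
proof -
  have psic: "continuous_on V0 \<psi>" and Gc: "continuous_on (ball c R) G"
    and Gpsi: "\<And>z. z \<in> V0 \<Longrightarrow> G (\<psi> z) = z" and psiG: "\<And>z. z \<in> ball c R \<Longrightarrow> \<psi> (G z) = z"
    and psiV: "\<psi> ` V0 = ball c R" and GV: "G ` ball c R = V0"
    using hom by (auto simp: homeomorphism_def)
  have inj: "\<And>z. z \<in> V0 \<Longrightarrow> \<psi> z = c \<Longrightarrow> z = y" using Gpsi y by metis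
  have tc: "continuous_on {0..1} (\<psi> \<circ> \<sigma>)"
    by (rule continuous_on_compose[OF sc continuous_on_subset[OF psic]]) (use sV in auto)
  have tne: "\<And>t. t \<in> {0..1} \<Longrightarrow> (\<psi> \<circ> \<sigma>) t \<noteq> c" using sV inj by auto
  obtain g where g: "continuous_on {0..1} g" "\<And>t. t\<in>{0..1} \<Longrightarrow> (\<psi> \<circ> \<sigma>) t - c = exp (g t)"
      "g 1 - g 0 = 2 * of_real pi * \<i>"
  proof -
    have "(\<psi> \<circ> \<sigma>) 1 = (\<psi> \<circ> \<sigma>) 0" using scl by simp
    from wind_exists[OF tc tne this] obtain g0 where g0: "continuous_on {0..1} g0"
       "\<forall>t\<in>{0..1}. (\<psi> \<circ> \<sigma>) t - c = exp (g0 t)"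
       "g0 1 - g0 0 = 2 * of_real pi * \<i> * of_int (wind (\<psi> \<circ> \<sigma>) c)" by blast
    from g0(3) have "g0 1 - g0 0 = 2 * of_real pi * \<i>" unfolding w1 by simp
    with g0(1,2) show ?thesis using that by blast
  qed
  have cin: "\<And>t. circ y \<rho> t \<in> V0" using rho circ_dist[OF rho(1), of y] by (auto simp: subset_iff)
  have cne: "\<And>t. circ y \<rho> t \<noteq> y" using circ_dist[OF rho(1), of y] rho(1) by (metis dist_self less_irrefl)
  have tc': "continuous_on {0..1} (\<psi> \<circ> circ y \<rho>)"
    by (rule continuous_on_compose[OF circ_cont continuous_on_subset[OF psic]]) (use cin in auto)
  have tne': "\<And>t. t \<in> {0..1} \<Longrightarrow> (\<psi> \<circ> circ y \<rho>) t \<noteq> c" using cin cne inj by auto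
  obtain g' where g': "continuous_on {0..1} g'" "\<And>t. t\<in>{0..1} \<Longrightarrow> (\<psi> \<circ> circ y \<rho>) t - c = exp (g' t)"
      "g' 1 - g' 0 = 2 * of_real pi * \<i>"
  proof -
    have "(\<psi> \<circ> circ y \<rho>) 1 = (\<psi> \<circ> circ y \<rho>) 0" using circ_closed by simp
    from wind_exists[OF tc' tne' this] obtain g0 where g0: "continuous_on {0..1} g0"
       "\<forall>t\<in>{0..1}. (\<psi> \<circ> circ y \<rho>) t - c = exp (g0 t)"
       "g0 1 - g0 0 = 2 * of_real pi * \<i> * of_int (wind (\<psi> \<circ> circ y \<rho>) c)" by blast
    from g0(3) have "g0 1 - g0 0 = 2 * of_real pi * \<i>" unfolding w2 by simp
    with g0(1,2) show ?thesis using that by blast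
  qed
  have gR: "\<And>t. t \<in> {0..1} \<Longrightarrow> exp (Re (g t)) < R"
  proof -
    fix t :: real assume t: "t \<in> {0..1}"
    have "\<psi> (\<sigma> t) \<in> ball c R" using psiV sV[OF t] by blast
    then have "norm (\<psi> (\<sigma> t) - c) < R" by (simp add: dist_norm norm_minus_commute)
    then show "exp (Re (g t)) < R" using g(2)[OF t] by simp
  qed
  have gR': "\<And>t. t \<in> {0..1} \<Longrightarrow> exp (Re (g' t)) < R"
  proof -
    fix t :: real assume t: "t \<in> {0..1}"
    have "\<psi> (circ y \<rho> t) \<in> ball c R" using psiV cin by blast
    then have "norm (\<psi> (circ y \<rho> t) - c) < R" by (simp add: dist_norm norm_minus_commute)
    then show "exp (Re (g' t)) < R" using g'(2)[OF t] by simp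
  qed
  define H where "H = (\<lambda>p::real\<times>real. c + exp ((1 - of_real (fst p)) * g (snd p) + of_real (fst p) * g' (snd p)))"
  define S where "S = {0..1::real} \<times> {0..1::real}"
  have HS: "\<And>p. p \<in> S \<Longrightarrow> H p \<in> ball c R \<and> H p \<noteq> c"
  proof -
    fix p assume p: "p \<in> S"
    obtain s t where st: "p = (s,t)" "s \<in> {0..1}" "t \<in> {0..1}" using p S_def by auto
    have re: "Re ((1 - of_real s) * g t + of_real s * g' t) = (1 - s) * Re (g t) + s * Re (g' t)"
      by simp
    have "(1 - s) * Re (g t) + s * Re (g' t) \<le> max (Re (g t)) (Re (g' t))"
      using st(2) by (intro convex_bound_le) auto
    then have "exp ((1 - s) * Re (g t) + s * Re (g' t)) \<le> exp (max (Re (g t)) (Re (g' t)))" by simp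
    also have "\<dots> < R" using gR[OF st(3)] gR'[OF st(3)] by (simp add: max_def)
    finally have "norm (H p - c) < R" unfolding H_def st(1) using re by simp
    then show "H p \<in> ball c R \<and> H p \<noteq> c" by (simp add: dist_norm norm_minus_commute H_def)
  qed
  have Hc: "continuous_on S H" unfolding H_def S_def
    by (intro continuous_intros continuous_on_compose2[OF g(1)] continuous_on_compose2[OF g'(1)]) auto
  define F where "F = (\<lambda>p. G (H p) - y)"
  have Fc: "continuous_on S F" unfolding F_def
    by (intro continuous_intros continuous_on_compose2[OF Gc Hc]) (use HS in auto)
  have Fne: "\<And>p. p \<in> S \<Longrightarrow> F p \<noteq> 0"
  proof
    fix p assume p: "p \<in> S" and "F p = 0"
    then have "G (H p) = y" by (simp add: F_def)
    then have "H p = c" using psiG[of "H p"] HS[OF p] y by auto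
    with HS[OF p] show False by simp
  qed
  obtain L where L: "continuous_on S L" "\<And>p. p \<in> S \<Longrightarrow> F p = exp (L p)"
  proof (rule continuous_logarithm_on_contractible[OF Fc _ Fne])
    show "contractible S" unfolding S_def by (intro convex_imp_contractible convex_Times) auto
  qed (assumption, metis that)
  have Hcl: "\<And>s. H (s,1) = H (s,0)"
  proof -
    fix s :: real
    have "(1 - of_real s) * g 1 + of_real s * g' 1 = ((1 - of_real s) * g 0 + of_real s * g' 0) + 2 * of_real pi * \<i>"
      using g(3) g'(3) by (simp add: algebra_simps)
    then show "H (s,1) = H (s,0)" unfolding H_def by (simp add: exp_add)
  qed
  define D where "D = (\<lambda>s. L (s,1) - L (s,0))"
  have "D constant_on {0..1}"
  proof (rule exp1_const)
    show "continuous_on {0..1} D" unfolding D_def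
      by (intro continuous_intros continuous_on_compose2[OF L(1)]) (auto simp: S_def)
    fix s :: real assume s: "s \<in> {0..1}"
    have "exp (L (s,1)) = exp (L (s,0))" using L(2)[of "(s,1)"] L(2)[of "(s,0)"] s Hcl[of s]
      by (simp add: S_def F_def)
    then show "exp (D s) = 1" by (simp add: D_def exp_diff)
  qed simp
  then have D01: "D 0 = D 1" by (auto simp: constant_on_def)
  have "L (1,1) - L (1,0) = (\<lambda>t. of_real (ln \<rho>) + 2 * of_real pi * \<i> * of_real t) 1 - (\<lambda>t. of_real (ln \<rho>) + 2 * of_real pi * \<i> * of_real t) 0"
  proof (rule log_incr_unique[of "\<lambda>t. L (1,t)"])
    show "continuous_on {0..1} (\<lambda>t. L (1, t))"
      by (intro continuous_intros continuous_on_compose2[OF L(1)]) (auto simp: S_def)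
    show "continuous_on {0..1} (\<lambda>t. of_real (ln \<rho>) + 2 * of_real pi * \<i> * of_real t)"
      by (intro continuous_intros)
    fix t :: real assume t: "t \<in> {0..1}"
    have "H (1,t) = \<psi> (circ y \<rho> t)" using g'(2)[OF t] by (simp add: H_def algebra_simps)
    then have "F (1,t) = circ y \<rho> t - y" using Gpsi cin by (simp add: F_def)
    also have "\<dots> = exp (of_real (ln \<rho>) + 2 * of_real pi * \<i> * of_real t)"
      using rho(1) unfolding circ_def by (simp add: exp_add exp_of_real)
    finally show "exp (L (1, t)) = exp (of_real (ln \<rho>) + 2 * of_real pi * \<i> * of_real t)"
      using L(2)[of "(1,t)"] t by (simp add: S_def)
  qed
  then have D1: "D 1 = 2 * of_real pi * \<i>" by (simp add: D_def)
  show ?thesis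
  proof (rule wind_char[where g="\<lambda>t. L (0,t)"])
    show "continuous_on {0..1} (\<lambda>t. L (0, t))"
      by (intro continuous_intros continuous_on_compose2[OF L(1)]) (auto simp: S_def)
    fix t :: real assume t: "t \<in> {0..1}"
    have "H (0,t) = \<psi> (\<sigma> t)" using g(2)[OF t] by (simp add: H_def algebra_simps)
    then have "F (0,t) = \<sigma> t - y" using Gpsi sV[OF t] by (simp add: F_def)
    then show "\<sigma> t - y = exp (L (0, t))" using L(2)[of "(0,t)"] t by (simp add: S_def)
  next
    show "L (0, 1) - L (0, 0) = 2 * complex_of_real pi * \<i> * of_int 1" using D01 D1 by (simp add: D_def)
  qed
qed



lemma open_Disk: "open Disk" by (simp add: Disk_def)
lemma zero_Disk: "0 \<in> Disk" by (simp add: Disk_def)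

lemma lh_cont: assumes "local_homeo U \<phi>" "open U" shows "continuous_on U \<phi>"
proof -
  have "\<And>x. x \<in> U \<Longrightarrow> isCont \<phi> x"
  proof -
    fix x assume x: "x \<in> U"
    then obtain V g where "open V" "x \<in> V" "homeomorphism V (\<phi> ` V) \<phi> g"
      using assms(1) unfolding local_homeo_def by blast
    then show "isCont \<phi> x" using continuous_on_eq_continuous_at homeomorphism_cont1 by blast
  qed
  then show ?thesis by (simp add: continuous_at_imp_continuous_on)
qed

lemma uniq:
  assumes lh: "local_homeo Disk \<phi>" and fc: "continuous_on Disk f" and fD: "f ` Disk \<subseteq> Disk"
    and f0: "f 0 = 0" and fe: "\<And>x. x \<in> Disk \<Longrightarrow> \<phi> (f x) = \<phi> x"
  shows "\<And>x. x \<in> Disk \<Longrightarrow> f x = x"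
proof -
  define A where "A = {x \<in> Disk. f x = x}"
  define B where "B = Disk \<inter> (\<lambda>z. f z - z) -` (- {0})"
  have oB: "open B" unfolding B_def
    by (rule continuous_open_preimage[OF _ open_Disk]) (auto intro!: continuous_intros fc)
  have oA: "open A"
  proof (subst open_subopen, intro ballI)
    fix x assume xA: "x \<in> A"
    then have x: "x \<in> Disk" "f x = x" by (auto simp: A_def)
    then obtain V g where V: "open V" "x \<in> V" "V \<subseteq> Disk" "homeomorphism V (\<phi> ` V) \<phi> g"
      using lh unfolding local_homeo_def by blast
    have gi: "\<And>z. z \<in> V \<Longrightarrow> g (\<phi> z) = z" using V(4) by (simp add: homeomorphism_def)
    define W where "W = Disk \<inter> f -` V"
    have oW: "open W" unfolding W_def by (rule continuous_open_preimage[OF fc open_Disk V(1)])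
    have "open (W \<inter> V)" using oW V(1) by auto
    moreover have "x \<in> W \<inter> V" using x V by (auto simp: W_def)
    moreover have "W \<inter> V \<subseteq> A"
    proof
      fix z assume z: "z \<in> W \<inter> V"
      then have "f z \<in> V" "z \<in> V" "z \<in> Disk" by (auto simp: W_def)
      then have "f z = z" using gi fe by metis
      then show "z \<in> A" using \<open>z \<in> Disk\<close> by (simp add: A_def)
    qed
    ultimately show "\<exists>T. open T \<and> x \<in> T \<and> T \<subseteq> A" by blast
  qed
  have cD: "connected Disk" unfolding Disk_def by simp
  have "Disk \<subseteq> A \<union> B" "A \<inter> B \<inter> Disk = {}" by (auto simp: A_def B_def)
  moreover have "A \<inter> Disk \<noteq> {}" using zero_Disk f0 by (auto simp: A_def)
  ultimately have "B \<inter> Disk = {}" using cD oA oB unfolding connected_def by blast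
  then show "\<And>x. x \<in> Disk \<Longrightarrow> f x = x" by (auto simp: B_def)
qed



lemma orient_iota:
  assumes hom: "homeomorphism Disk Disk \<iota> \<kappa>" and e: "\<And>x. x \<in> Disk \<Longrightarrow> \<psi> (\<iota> x) = \<phi> x"
    and P: "pointed_lh \<phi>" and Q: "pointed_lh \<psi>"
  shows "orient_pres Disk \<iota>"
  unfolding orient_pres_def
proof
  fix x assume xD: "x \<in> Disk"
  have ic: "continuous_on Disk \<iota>" and iD: "\<iota> ` Disk = Disk" and ki: "\<And>z. z \<in> Disk \<Longrightarrow> \<kappa> (\<iota> z) = z"
    using hom by (auto simp: homeomorphism_def)
  define y where "y = \<iota> x"
  define c where "c = \<phi> x"
  have yD: "y \<in> Disk" using iD xD y_def by blast
  have yc: "\<psi> y = c" using e xD y_def c_def by simp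
  obtain V G where V: "open V" "y \<in> V" "V \<subseteq> Disk" "open (\<psi> ` V)" "homeomorphism V (\<psi> ` V) \<psi> G"
    using Q yD unfolding pointed_lh_def local_homeo_def by blast
  have psic: "continuous_on V \<psi>" using V(5) homeomorphism_cont1 by blast
  obtain R where R: "R > 0" "ball c R \<subseteq> \<psi> ` V" using V(2,4) yc open_contains_ball by blast
  define V0 where "V0 = V \<inter> \<psi> -` ball c R"
  have oV0: "open V0" unfolding V0_def by (rule continuous_open_preimage[OF psic V(1)]) simp
  have yV0: "y \<in> V0" using V(2) yc R(1) by (simp add: V0_def)
  have "\<psi> ` V0 = ball c R" using R(2) by (auto simp: V0_def)
  then have hom0: "homeomorphism V0 (ball c R) \<psi> G"
    by (intro homeomorphism_of_subsets[OF V(5)]) (auto simp: V0_def)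
  obtain e\<psi> where e\<psi>: "e\<psi> > 0" "\<And>r. 0 < r \<and> r < e\<psi> \<Longrightarrow> wind (\<psi> \<circ> circ y r) (\<psi> y) = 1"
    using Q yD unfolding pointed_lh_def orient_pres_def by blast
  obtain e1 where e1: "e1 > 0" "cball y e1 \<subseteq> V0" using oV0 yV0 open_contains_cball by blast
  define \<rho> where "\<rho> = min (e\<psi>/2) e1"
  have rho: "\<rho> > 0" "cball y \<rho> \<subseteq> V0" "\<rho> < e\<psi>" using e\<psi>(1) e1 by (auto simp: \<rho>_def)
  have w2: "wind (\<psi> \<circ> circ y \<rho>) c = 1" using e\<psi>(2)[of \<rho>] rho yc by simp
  obtain e\<phi> where e\<phi>: "e\<phi> > 0" "\<And>r. 0 < r \<and> r < e\<phi> \<Longrightarrow> wind (\<phi> \<circ> circ x r) (\<phi> x) = 1"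
    using P xD unfolding pointed_lh_def orient_pres_def by blast
  have oW: "open (Disk \<inter> \<iota> -` V0)" by (rule continuous_open_preimage[OF ic open_Disk oV0])
  have "x \<in> Disk \<inter> \<iota> -` V0" using xD yV0 y_def by simp
  then obtain \<delta> where \<delta>: "\<delta> > 0" "ball x \<delta> \<subseteq> Disk \<inter> \<iota> -` V0" using oW open_contains_ball by blast
  show "\<exists>e>0. \<forall>r. 0 < r \<and> r < e \<longrightarrow> wind (\<iota> \<circ> circ x r) (\<iota> x) = 1"
  proof (intro exI[of _ "min e\<phi> \<delta>"] conjI allI impI)
    show "0 < min e\<phi> \<delta>" using e\<phi>(1) \<delta>(1) by simp
    fix r assume r: "0 < r \<and> r < min e\<phi> \<delta>"
    have cin: "\<And>t. circ x r t \<in> Disk \<and> \<iota> (circ x r t) \<in> V0"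
    proof -
      fix t
      have "circ x r t \<in> ball x \<delta>" using circ_dist[of r x t] r by simp
      then show "circ x r t \<in> Disk \<and> \<iota> (circ x r t) \<in> V0" using \<delta>(2) by auto
    qed
    have cne: "\<And>t. circ x r t \<noteq> x" using circ_dist[of r x] r by (metis dist_self less_irrefl)
    have eq: "\<psi> \<circ> (\<iota> \<circ> circ x r) = \<phi> \<circ> circ x r" using cin e by auto
    show "wind (\<iota> \<circ> circ x r) (\<iota> x) = 1"
      unfolding y_def[symmetric]
    proof (rule key[OF hom0 yV0 yc])
      show "continuous_on {0..1} (\<iota> \<circ> circ x r)"
        by (rule continuous_on_compose[OF circ_cont continuous_on_subset[OF ic]]) (use cin in auto)
      fix t :: real
      show "(\<iota> \<circ> circ x r) t \<in> V0 \<and> (\<iota> \<circ> circ x r) t \<noteq> y"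
        using cin[of t] ki[of "circ x r t"] ki[OF xD] cne[of t] y_def by auto
    next
      show "(\<iota> \<circ> circ x r) 1 = (\<iota> \<circ> circ x r) 0" using circ_closed by simp
      show "wind (\<psi> \<circ> (\<iota> \<circ> circ x r)) c = 1" unfolding eq c_def using e\<phi>(2) r by simp
    qed (use rho w2 in auto)
  qed
qed



lemma antisym:
  assumes P: "pointed_lh \<phi>" and Q: "pointed_lh \<psi>" and i1: "immerses \<phi> \<psi>" and i2: "immerses \<psi> \<phi>"
  shows "iso_plh \<phi> \<psi>"
proof -
  obtain \<iota> where \<iota>: "continuous_on Disk \<iota>" "\<iota> ` Disk \<subseteq> Disk" "\<iota> 0 = 0" "\<And>x. x \<in> Disk \<Longrightarrow> \<psi> (\<iota> x) = \<phi> x"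
    using i1 unfolding immerses_def by blast
  obtain \<kappa> where \<kappa>: "continuous_on Disk \<kappa>" "\<kappa> ` Disk \<subseteq> Disk" "\<kappa> 0 = 0" "\<And>x. x \<in> Disk \<Longrightarrow> \<phi> (\<kappa> x) = \<psi> x"
    using i2 unfolding immerses_def by blast
  have lP: "local_homeo Disk \<phi>" using P unfolding pointed_lh_def by blast
  have lQ: "local_homeo Disk \<psi>" using Q unfolding pointed_lh_def by blast
  have ki: "\<And>x. x \<in> Disk \<Longrightarrow> \<kappa> (\<iota> x) = x"
  proof -
    fix x assume x: "x \<in> Disk"
    have c: "continuous_on Disk (\<kappa> \<circ> \<iota>)" by (rule continuous_on_compose[OF \<iota>(1) continuous_on_subset[OF \<kappa>(1) \<iota>(2)]])
    have d: "(\<kappa> \<circ> \<iota>) ` Disk \<subseteq> Disk" using \<kappa>(2) \<iota>(2) by (auto simp: image_subset_iff)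
    have z: "(\<kappa> \<circ> \<iota>) 0 = 0" using \<kappa>(3) \<iota>(3) by simp
    have e: "\<And>x. x \<in> Disk \<Longrightarrow> \<phi> ((\<kappa> \<circ> \<iota>) x) = \<phi> x"
    proof -
      fix x assume x: "x \<in> Disk"
      have "\<iota> x \<in> Disk" using x \<iota>(2) by blast
      then show "\<phi> ((\<kappa> \<circ> \<iota>) x) = \<phi> x" using \<kappa>(4)[of "\<iota> x"] \<iota>(4)[OF x] by simp
    qed
    show "\<kappa> (\<iota> x) = x" using uniq[where \<phi>=\<phi> and f="\<kappa> \<circ> \<iota>", OF lP c d z e x] by simp
  qed
  have ik: "\<And>x. x \<in> Disk \<Longrightarrow> \<iota> (\<kappa> x) = x"
  proof -
    fix x assume x: "x \<in> Disk"
    have c: "continuous_on Disk (\<iota> \<circ> \<kappa>)" by (rule continuous_on_compose[OF \<kappa>(1) continuous_on_subset[OF \<iota>(1) \<kappa>(2)]])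
    have d: "(\<iota> \<circ> \<kappa>) ` Disk \<subseteq> Disk" using \<iota>(2) \<kappa>(2) by (auto simp: image_subset_iff)
    have z: "(\<iota> \<circ> \<kappa>) 0 = 0" using \<iota>(3) \<kappa>(3) by simp
    have e: "\<And>x. x \<in> Disk \<Longrightarrow> \<psi> ((\<iota> \<circ> \<kappa>) x) = \<psi> x"
    proof -
      fix x assume x: "x \<in> Disk"
      have "\<kappa> x \<in> Disk" using x \<kappa>(2) by blast
      then show "\<psi> ((\<iota> \<circ> \<kappa>) x) = \<psi> x" using \<iota>(4)[of "\<kappa> x"] \<kappa>(4)[OF x] by simp
    qed
    show "\<iota> (\<kappa> x) = x" using uniq[where \<phi>=\<psi> and f="\<iota> \<circ> \<kappa>", OF lQ c d z e x] by simp
  qed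
  have hom: "homeomorphism Disk Disk \<iota> \<kappa>"
    by (rule homeomorphismI[OF \<iota>(1) \<kappa>(1) \<iota>(2) \<kappa>(2) ki ik])
  have "orient_pres Disk \<iota>" by (rule orient_iota[OF hom \<iota>(4) P Q])
  then show ?thesis unfolding iso_plh_def using hom \<iota>(3) \<kappa>(4)
    by (intro exI[of _ \<iota>] exI[of _ \<kappa>]) (simp add: \<kappa>(4))
qed


lemma trans_imm: assumes "immerses \<phi> \<psi>" "immerses \<psi> \<theta>" shows "immerses \<phi> \<theta>"
proof -
  obtain \<iota> where \<iota>: "continuous_on Disk \<iota>" "\<iota> ` Disk \<subseteq> Disk" "\<iota> 0 = 0" "\<And>x. x \<in> Disk \<Longrightarrow> \<psi> (\<iota> x) = \<phi> x"
    using assms(1) unfolding immerses_def by blast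
  obtain \<kappa> where \<kappa>: "continuous_on Disk \<kappa>" "\<kappa> ` Disk \<subseteq> Disk" "\<kappa> 0 = 0" "\<And>x. x \<in> Disk \<Longrightarrow> \<theta> (\<kappa> x) = \<psi> x"
    using assms(2) unfolding immerses_def by blast
  show ?thesis unfolding immerses_def
  proof (intro exI[of _ "\<kappa> \<circ> \<iota>"] conjI)
    show "continuous_on Disk (\<kappa> \<circ> \<iota>)" by (rule continuous_on_compose[OF \<iota>(1) continuous_on_subset[OF \<kappa>(1) \<iota>(2)]])
  qed (use \<iota> \<kappa> in \<open>auto simp: image_subset_iff\<close>)
qed

lemma refl_imm: "immerses \<phi> \<phi>"
  unfolding immerses_def by (intro exI[of _ id]) auto

lemma iso_imm:
  assumes "iso_plh \<phi> \<phi>'" "iso_plh \<psi> \<psi>'"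
  shows "immerses \<phi> \<psi> \<longleftrightarrow> immerses \<phi>' \<psi>'"
proof -
  obtain h1 k1 where 1: "homeomorphism Disk Disk h1 k1" "h1 0 = 0" "\<And>y. y \<in> Disk \<Longrightarrow> \<phi>' y = \<phi> (k1 y)"
    using assms(1) unfolding iso_plh_def by blast
  obtain h2 k2 where 2: "homeomorphism Disk Disk h2 k2" "h2 0 = 0" "\<And>y. y \<in> Disk \<Longrightarrow> \<psi>' y = \<psi> (k2 y)"
    using assms(2) unfolding iso_plh_def by blast
  have h1c: "continuous_on Disk h1" "h1 ` Disk = Disk" "continuous_on Disk k1" "k1 ` Disk = Disk"
    "\<And>x. x \<in> Disk \<Longrightarrow> k1 (h1 x) = x" "\<And>x. x \<in> Disk \<Longrightarrow> h1 (k1 x) = x"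
    using 1(1) by (auto simp: homeomorphism_def)
  have h2c: "continuous_on Disk h2" "h2 ` Disk = Disk" "continuous_on Disk k2" "k2 ` Disk = Disk"
    "\<And>x. x \<in> Disk \<Longrightarrow> k2 (h2 x) = x" "\<And>x. x \<in> Disk \<Longrightarrow> h2 (k2 x) = x"
    using 2(1) by (auto simp: homeomorphism_def)
  have k10: "k1 0 = 0" using h1c(5)[OF zero_Disk] 1(2) by simp
  have k20: "k2 0 = 0" using h2c(5)[OF zero_Disk] 2(2) by simp
  show ?thesis
  proof
    assume "immerses \<phi> \<psi>"
    then obtain \<iota> where \<iota>: "continuous_on Disk \<iota>" "\<iota> ` Disk \<subseteq> Disk" "\<iota> 0 = 0" "\<And>x. x \<in> Disk \<Longrightarrow> \<psi> (\<iota> x) = \<phi> x"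
      unfolding immerses_def by blast
    show "immerses \<phi>' \<psi>'" unfolding immerses_def
    proof (intro exI[of _ "h2 \<circ> \<iota> \<circ> k1"] conjI ballI)
      show "continuous_on Disk (h2 \<circ> \<iota> \<circ> k1)"
        by (intro continuous_on_compose continuous_on_subset[OF h2c(1)] continuous_on_subset[OF \<iota>(1)] h1c(3))
           (use \<iota>(2) h1c(4) in auto)
      show "(h2 \<circ> \<iota> \<circ> k1) ` Disk \<subseteq> Disk" using \<iota>(2) h1c(4) h2c(2) by (auto simp: image_subset_iff)
      show "(h2 \<circ> \<iota> \<circ> k1) 0 = 0" using k10 \<iota>(3) 2(2) by simp
      fix x assume x: "x \<in> Disk"
      have a: "k1 x \<in> Disk" using x h1c(4) by blast
      have b: "\<iota> (k1 x) \<in> Disk" using a \<iota>(2) by blast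
      have c: "h2 (\<iota> (k1 x)) \<in> Disk" using b h2c(2) by blast
      show "\<psi>' ((h2 \<circ> \<iota> \<circ> k1) x) = \<phi>' x" using 2(3)[OF c] h2c(5)[OF b] \<iota>(4)[OF a] 1(3)[OF x] by simp
    qed
  next
    assume "immerses \<phi>' \<psi>'"
    then obtain \<iota> where \<iota>: "continuous_on Disk \<iota>" "\<iota> ` Disk \<subseteq> Disk" "\<iota> 0 = 0" "\<And>x. x \<in> Disk \<Longrightarrow> \<psi>' (\<iota> x) = \<phi>' x"
      unfolding immerses_def by blast
    show "immerses \<phi> \<psi>" unfolding immerses_def
    proof (intro exI[of _ "k2 \<circ> \<iota> \<circ> h1"] conjI ballI)
      show "continuous_on Disk (k2 \<circ> \<iota> \<circ> h1)"
        by (intro continuous_on_compose continuous_on_subset[OF h2c(3)] continuous_on_subset[OF \<iota>(1)] h1c(1))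
           (use \<iota>(2) h1c(2) in auto)
      show "(k2 \<circ> \<iota> \<circ> h1) ` Disk \<subseteq> Disk" using \<iota>(2) h1c(2) h2c(4) by (auto simp: image_subset_iff)
      show "(k2 \<circ> \<iota> \<circ> h1) 0 = 0" using k20 \<iota>(3) 1(2) by simp
      fix x assume x: "x \<in> Disk"
      have a: "h1 x \<in> Disk" using x h1c(2) by blast
      have b: "\<iota> (h1 x) \<in> Disk" using a \<iota>(2) by blast
      show "\<psi> ((k2 \<circ> \<iota> \<circ> h1) x) = \<phi> x" using 2(3)[OF b] \<iota>(4)[OF a] 1(3)[OF a] h1c(5)[OF x] by simp
    qed
  qed
qed

theorem mainTheorem1:
  shows "(\<forall>\<phi> \<psi>. pointed_lh \<phi> \<and> pointed_lh \<psi> \<and> immerses \<phi> \<psi> \<and> immerses \<psi> \<phi>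
            \<longrightarrow> iso_plh \<phi> \<psi>)
       \<and> (\<forall>\<phi> \<phi>' \<psi> \<psi>'. pointed_lh \<phi> \<and> pointed_lh \<phi>' \<and> pointed_lh \<psi> \<and> pointed_lh \<psi>' \<and>
            iso_plh \<phi> \<phi>' \<and> iso_plh \<psi> \<psi>' \<longrightarrow> (immerses \<phi> \<psi> \<longleftrightarrow> immerses \<phi>' \<psi>'))
       \<and> (\<forall>\<phi>. pointed_lh \<phi> \<longrightarrow> immerses \<phi> \<phi>)
       \<and> (\<forall>\<phi> \<psi> \<theta>. pointed_lh \<phi> \<and> pointed_lh \<psi> \<and> pointed_lh \<theta> \<and>
            immerses \<phi> \<psi> \<and> immerses \<psi> \<theta> \<longrightarrow> immerses \<phi> \<theta>)"
  using antisym iso_imm refl_imm trans_imm by (intro conjI allI impI; meson)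

end
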